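(* Let $a_n$ be the number of Dyck paths of semilength $n\ge 1$ in which every descent has odd length, and let $g_0(z)=\sum_{n\ge1}a_n z^{2n}$. Then $$g_0=\frac{z\,v_1}{v_1^2-z^2}.$$ Moreover, writing $Z=z^2$, $g_0$ is a power series in $Z$ satisfying $$g_0=\frac{Z(1+g_0)}{1-Z^2(1+g_0)^2},\qquad\text{equivalently}\qquad Z^2g_0^3+2Z^2g_0^2-(1-Z-Z^2)\,g_0+Z=0,$$ so that $g_0=Z+Z^2+2Z^3+5Z^4+12Z^5+30Z^6+79Z^7+\cdots$.
   Context: A Dyck path is a finite sequence of up-steps $(1,1)$ and down-steps $(1,-1)$ starting at height $0$, never going below height $0$, and ending at height $0$; its semilength is half its number of steps. Only nonempty paths are considered. A descent is a maximal run of consecutive down-steps; its length is the number of down-steps in it. Let $v_1=v_1(z)$ denote the unique root $u$ of the cubic $$z u^3+(z^2-1)u^2-z^3u+z^2=0$$ which is a Laurent series in $z$ with $z\,v_1(z)\to1$ as $z\to0$. Its expansion begins $v_1=\frac1z-z-z^5-2z^7-4z^9-10z^{11}-\cdots$. The other two roots of the cubic tend to $0$ as $z\to0$. *)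

theory Defs
  imports Complex_Main "HOL-Computational_Algebra.Formal_Laurent_Series"
begin

(* A lattice path is a bool list: True = up-step (1,1), False = down-step (1,-1). *)

definition path_height :: "bool list \<Rightarrow> int" where
  "path_height xs = int (count_list xs True) - int (count_list xs False)"

definition is_dyck :: "bool list \<Rightarrow> bool" where
  "is_dyck xs \<longleftrightarrow> (\<forall>k\<le>length xs. 0 \<le> path_height (take k xs)) \<and> path_height xs = 0"

definition is_descent :: "bool list \<Rightarrow> nat \<Rightarrow> nat \<Rightarrow> bool" where
  "is_descent xs i j \<longleftrightarrow> i \<le> j \<and> j < length xs \<and> (\<forall>k. i \<le> k \<and> k \<le> j \<longrightarrow> \<not> xs ! k)
     \<and> (i = 0 \<or> xs ! (i - 1)) \<and> (j + 1 = length xs \<or> xs ! (j + 1))"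

definition all_descents_odd :: "bool list \<Rightarrow> bool" where
  "all_descents_odd xs \<longleftrightarrow> (\<forall>i j. is_descent xs i j \<longrightarrow> odd (j - i + 1))"

definition a_odd :: "nat \<Rightarrow> nat" where
  "a_odd n = card {xs. length xs = 2 * n \<and> is_dyck xs \<and> all_descents_odd xs}"

definition cubic_v :: "real fls \<Rightarrow> real fls" where
  "cubic_v u = fls_X * u ^ 3 + (fls_X ^ 2 - 1) * u ^ 2 - fls_X ^ 3 * u + fls_X ^ 2"

(* v_1: the unique Laurent-series root with z * v_1 \<rightarrow> 1, i.e. leading term z^{-1} *)
definition v1 :: "real fls" where
  "v1 = (THE u. cubic_v u = 0 \<and> u \<noteq> 0 \<and> fls_subdegree u = -1 \<and> fls_nth u (-1) = 1)"

definition g0 :: "real fls" where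
  "g0 = fps_to_fls (Abs_fps (\<lambda>k. if even k \<and> k > 0 then real (a_odd (k div 2)) else 0))"

(* the same series as a power series in Z = z^2: G(Z) = sum_{n\<ge>1} a_n Z^n *)
definition G0 :: "real fps" where
  "G0 = Abs_fps (\<lambda>n. if n = 0 then 0 else real (a_odd n))"

end

theory Submission
  imports Defs
begin


lemma ph_simps[simp]:
  "path_height [] = 0"
  "path_height (x # xs) = (if x then 1 else -1) + path_height xs"
  "path_height (xs @ ys) = path_height xs + path_height ys"
  by (auto simp: path_height_def)

fun nnf :: "int \<Rightarrow> bool list \<Rightarrow> bool" where
  "nnf h [] = (0 \<le> h)"
| "nnf h (x # xs) = (0 \<le> h \<and> nnf (h + (if x then 1 else -1)) xs)"

lemma nnf_iff: "nnf h xs \<longleftrightarrow> (\<forall>k\<le>length xs. 0 \<le> h + path_height (take k xs))"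
proof (induction xs arbitrary: h)
  case Nil then show ?case by simp
next
  case (Cons x xs)
  have "(\<forall>k\<le>length (x#xs). 0 \<le> h + path_height (take k (x#xs))) \<longleftrightarrow>
        0 \<le> h \<and> (\<forall>k\<le>length xs. 0 \<le> h + path_height (take (Suc k) (x#xs)))"
    (is "?L = ?R")
  proof
    assume ?L then show ?R by (metis Suc_le_mono add.right_neutral le0 length_Cons ph_simps(1) take0)
  next
    assume R: ?R
    show ?L
    proof (intro allI impI)
      fix k assume "k \<le> length (x#xs)"
      then show "0 \<le> h + path_height (take k (x#xs))" using R by (cases k) auto
    qed
  qed
  then show ?case using Cons[of "h + (if x then 1 else -1)"] by (simp add: algebra_simps)
qed

lemma dyck_iff: "is_dyck xs \<longleftrightarrow> nnf 0 xs \<and> path_height xs = 0"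
  by (simp add: is_dyck_def nnf_iff)

lemma nnf_ge: "nnf h xs \<Longrightarrow> 0 \<le> h"
  by (cases xs) auto

lemma nnf_end: "nnf h xs \<Longrightarrow> 0 \<le> h + path_height xs"
proof (induction xs arbitrary: h)
  case (Cons x xs)
  then have "0 \<le> (h + (if x then 1 else -1)) + path_height xs" by auto
  then show ?case by (simp add: algebra_simps)
qed simp

lemma nnf_append: "nnf h (xs @ ys) \<longleftrightarrow> nnf h xs \<and> nnf (h + path_height xs) ys"
  by (induction xs arbitrary: h) (auto simp: algebra_simps dest: nnf_ge)

lemma nnf_mono: "nnf h xs \<Longrightarrow> h \<le> h' \<Longrightarrow> nnf h' xs"
  by (induction xs arbitrary: h h') auto

lemma nnf_rep: "nnf h (replicate k False) \<longleftrightarrow> int k \<le> h"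
  by (induction k arbitrary: h) auto

lemma ph_rep[simp]: "path_height (replicate k False) = - int k"
  by (induction k) auto

lemma first_return:
  "nnf 0 w \<Longrightarrow> 1 \<le> path_height w \<Longrightarrow> \<exists>p r. w = p @ True # r \<and> nnf 0 p \<and> path_height p = 0 \<and> nnf 0 r \<and> path_height r = path_height w - 1"
proof (induction w rule: rev_induct)
  case Nil then show ?case by simp
next
  case (snoc x w)
  have nw: "nnf 0 w" and ne: "nnf (path_height w) [x]" using snoc.prems by (auto simp: nnf_append)
  show ?case
  proof (cases "1 \<le> path_height w")
    case True
    then obtain p r where w: "w = p @ True # r" "nnf 0 p" "path_height p = 0" "nnf 0 r" "path_height r = path_height w - 1"
      using snoc.IH nw by blast
    have "nnf 0 (r @ [x])" using w snoc.prems True by (auto simp: nnf_append split: if_splits)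
    then show ?thesis using w by (intro exI[of _ p] exI[of _ "r @ [x]"]) auto
  next
    case False
    with nnf_end[OF nw] have "path_height w = 0" by simp
    moreover then have "x" using snoc.prems by (auto split: if_splits)
    ultimately show ?thesis using nw by (intro exI[of _ w] exI[of _ "[]"]) auto
  qed
qed

lemma uniq:
  "xs @ True # ys = xs' @ True # ys' \<Longrightarrow> path_height xs = path_height xs' \<Longrightarrow> nnf 0 ys \<Longrightarrow> nnf 0 ys' \<Longrightarrow> xs = xs'"
proof (induction xs arbitrary: xs')
  case Nil
  show ?case
  proof (cases xs')
    case (Cons a t)
    then have "ys = t @ True # ys'" using Nil by simp
    then have "0 \<le> path_height t" using Nil.prems nnf_end by (auto simp: nnf_append)
    then show ?thesis using Nil.prems Cons by auto
  qed simp
next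
  case (Cons a xs)
  show ?case
  proof (cases xs')
    case Nil
    then have "ys' = xs @ True # ys" using Cons by simp
    then have "0 \<le> path_height xs" using Cons.prems nnf_end by (auto simp: nnf_append)
    then show ?thesis using Cons.prems Nil by auto
  next
    case (Cons b t)
    then show ?thesis using Cons.prems Cons.IH[of t] by auto
  qed
qed


lemma desc_left:
  assumes "is_descent xs i j" shows "is_descent (xs @ True # ys) i j"
  using assms unfolding is_descent_def
  by (auto simp: nth_append)

lemma desc_right:
  assumes "is_descent ys i j" shows "is_descent (xs @ True # ys) (i + length xs + 1) (j + length xs + 1)"
proof -
  let ?w = "xs @ True # ys" let ?n = "length xs"
  have e: "\<And>k. ?w ! (k + ?n + 1) = ys ! k" by (simp add: nth_append)
  have d: "i \<le> j" "j < length ys" "\<And>k. i \<le> k \<Longrightarrow> k \<le> j \<Longrightarrow> \<not> ys ! k"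
    "i = 0 \<or> ys ! (i - 1)" "j + 1 = length ys \<or> ys ! (j + 1)"
    using assms unfolding is_descent_def by auto
  show ?thesis unfolding is_descent_def
  proof (intro conjI allI impI)
    show "i + ?n + 1 \<le> j + ?n + 1" "j + ?n + 1 < length ?w" using d by auto
    fix k assume k: "i + ?n + 1 \<le> k \<and> k \<le> j + ?n + 1"
    then have "k = (k - ?n - 1) + ?n + 1" by simp
    then have "?w ! k = ys ! (k - ?n - 1)" using e by metis
    moreover have "i \<le> k - ?n - 1" "k - ?n - 1 \<le> j" using k by auto
    ultimately show "\<not> ?w ! k" using d(3)[of "k - ?n - 1"] by auto
  next
    show "i + ?n + 1 = 0 \<or> ?w ! (i + ?n + 1 - 1)"
    proof (cases i)
      case 0 then show ?thesis by (simp add: nth_append)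
    next
      case (Suc i')
      then have "?w ! (i + ?n + 1 - 1) = ys ! i'" using e[of i'] by simp
      then show ?thesis using d(4) Suc by simp
    qed
    show "j + ?n + 1 + 1 = length ?w \<or> ?w ! (j + ?n + 1 + 1)"
      using d(5) e[of "j+1"] by (auto simp: algebra_simps)
  qed
qed

lemma desc_split:
  assumes "is_descent (xs @ True # ys) i j"
  shows "(j < length xs \<and> is_descent xs i j) \<or> (length xs < i \<and> is_descent ys (i - length xs - 1) (j - length xs - 1))"
proof -
  let ?w = "xs @ True # ys" let ?n = "length xs"
  have d: "i \<le> j" "j < length ?w" "\<And>k. i \<le> k \<Longrightarrow> k \<le> j \<Longrightarrow> \<not> ?w ! k"
    "i = 0 \<or> ?w ! (i - 1)" "j + 1 = length ?w \<or> ?w ! (j + 1)"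
    using assms unfolding is_descent_def by auto
  have "?w ! ?n" by simp
  then have "\<not> (i \<le> ?n \<and> ?n \<le> j)" using d(3) by blast
  then consider "j < ?n" | "?n < i" by linarith
  then show ?thesis
  proof cases
    case 1
    have "is_descent xs i j" unfolding is_descent_def
    proof (intro conjI allI impI)
      show "i \<le> j" "j < ?n" using d 1 by auto
      fix k assume "i \<le> k \<and> k \<le> j" then show "\<not> xs ! k" using d(3)[of k] 1 by (auto simp: nth_append)
    next
      show "i = 0 \<or> xs ! (i - 1)" using d(4) 1 d(1) by (auto simp: nth_append)
      show "j + 1 = ?n \<or> xs ! (j + 1)" using d(5) 1 by (auto simp: nth_append split: if_splits)
    qed
    then show ?thesis using 1 by blast
  next
    case 2
    have e: "\<And>k. ?n < k \<Longrightarrow> ?w ! k = ys ! (k - ?n - 1)"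
      by (auto simp: nth_append)
    have "is_descent ys (i - ?n - 1) (j - ?n - 1)" unfolding is_descent_def
    proof (intro conjI allI impI)
      show "i - ?n - 1 \<le> j - ?n - 1" "j - ?n - 1 < length ys" using d 2 by auto
      fix k assume k: "i - ?n - 1 \<le> k \<and> k \<le> j - ?n - 1"
      then have "i \<le> k + ?n + 1" "k + ?n + 1 \<le> j" using 2 d(1) by auto
      then have "\<not> ?w ! (k + ?n + 1)" using d(3)[of "k + ?n + 1"] by blast
      then show "\<not> ys ! k" using e[of "k + ?n + 1"] by simp
    next
      show "i - ?n - 1 = 0 \<or> ys ! (i - ?n - 1 - 1)"
      proof (cases "i = ?n + 1")
        case False
        then have "?n < i - 1" using 2 by simp
        then show ?thesis using d(4) e[of "i - 1"] 2 by (auto simp: algebra_simps)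
      qed simp
      have jj: "j - ?n - 1 + 1 = j + 1 - ?n - 1" using 2 d(1) by simp
      show "j - ?n - 1 + 1 = length ys \<or> ys ! (j - ?n - 1 + 1)"
        unfolding jj
      proof -
        show "j + 1 - ?n - 1 = length ys \<or> ys ! (j + 1 - ?n - 1)"
      proof (cases "j + 1 = length ?w")
        case True
        have "ys \<noteq> []" using True 2 d(1) by auto
        then show ?thesis using True by simp
      next
        case False
        then have "?w ! (j+1)" using d(5) by blast
        then have "ys ! (j + 1 - ?n - 1)" using e[of "j+1"] 2 d(1) by simp
        then show ?thesis by blast
      qed
      qed
    qed
    then show ?thesis using 2 by blast
  qed
qed

lemma ado_app: "all_descents_odd (xs @ True # ys) \<longleftrightarrow> all_descents_odd xs \<and> all_descents_odd ys"
proof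
  assume a: "all_descents_odd (xs @ True # ys)"
  show "all_descents_odd xs \<and> all_descents_odd ys"
  proof
    show "all_descents_odd xs" unfolding all_descents_odd_def
      using a desc_left unfolding all_descents_odd_def by blast
    show "all_descents_odd ys" unfolding all_descents_odd_def
    proof (intro allI impI)
      fix i j assume "is_descent ys i j"
      then have "is_descent (xs @ True # ys) (i + length xs + 1) (j + length xs + 1)" by (rule desc_right)
      then have "odd ((j + length xs + 1) - (i + length xs + 1) + 1)" using a unfolding all_descents_odd_def by blast
      then show "odd (j - i + 1)" by simp
    qed
  qed
next
  assume a: "all_descents_odd xs \<and> all_descents_odd ys"
  show "all_descents_odd (xs @ True # ys)" unfolding all_descents_odd_def
  proof (intro allI impI)
    fix i j assume d: "is_descent (xs @ True # ys) i j"
    then have ij: "i \<le> j" unfolding is_descent_def by auto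
    from desc_split[OF d] show "odd (j - i + 1)"
    proof
      assume "j < length xs \<and> is_descent xs i j" then show ?thesis using a unfolding all_descents_odd_def by blast
    next
      assume h: "length xs < i \<and> is_descent ys (i - length xs - 1) (j - length xs - 1)"
      then have "odd ((j - length xs - 1) - (i - length xs - 1) + 1)" using a unfolding all_descents_odd_def by blast
      moreover have "(j - length xs - 1) - (i - length xs - 1) = j - i" using h ij by simp
      ultimately show ?thesis by metis
    qed
  qed
qed

lemma desc_rep: "is_descent (replicate k False) i j \<longleftrightarrow> i = 0 \<and> j + 1 = k"
proof
  assume "is_descent (replicate k False) i j"
  then show "i = 0 \<and> j + 1 = k" unfolding is_descent_def
    by (metis Suc_eq_plus1 diff_less gr0I length_replicate less_imp_diff_less less_one
        linorder_neqE_nat not_less_eq nth_replicate order.strict_trans1)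
qed (auto simp: is_descent_def)

lemma ado_rep: "all_descents_odd (replicate k False) \<longleftrightarrow> (k = 0 \<or> odd k)"
  unfolding all_descents_odd_def desc_rep
  by (cases k) auto



definition valid :: "bool list \<Rightarrow> bool" where "valid xs \<longleftrightarrow> is_dyck xs \<and> all_descents_odd xs"

lemma ado_nil[simp]: "all_descents_odd []"
  using ado_rep[of 0] by simp

lemma valid_nil[simp]: "valid []"
  by (simp add: valid_def dyck_iff)

lemma last_split: "(\<exists>k. xs = replicate k False) \<or> (\<exists>r k. xs = r @ True # replicate k False)"
proof (induction xs rule: rev_induct)
  case Nil then show ?case by (metis replicate_0)
next
  case (snoc x xs)
  show ?case
  proof (cases x)
    case True then show ?thesis by (metis replicate_0)
  next
    case False
    from snoc show ?thesis
    proof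
      assume "\<exists>k. xs = replicate k False"
      then obtain k where "xs = replicate k False" by blast
      then have "xs @ [x] = replicate (Suc k) False" using False by (simp add: replicate_append_same)
      then show ?thesis by blast
    next
      assume "\<exists>r k. xs = r @ True # replicate k False"
      then obtain r k where "xs = r @ True # replicate k False" by blast
      then have "xs @ [x] = r @ True # replicate (Suc k) False" using False by (simp add: replicate_append_same)
      then show ?thesis by blast
    qed
  qed
qed

lemma dyck_last:
  assumes "is_dyck q" "q \<noteq> []"
  shows "\<exists>r k. q = r @ True # replicate k False \<and> 1 \<le> k \<and> nnf 0 r \<and> path_height r = int k - 1"
proof -
  have n: "nnf 0 q" "path_height q = 0" using assms(1) by (auto simp: dyck_iff)
  from last_split[of q] show ?thesis
  proof
    assume "\<exists>k. q = replicate k False"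
    then obtain k where "q = replicate k False" by blast
    then show ?thesis using n assms(2) by simp
  next
    assume "\<exists>r k. q = r @ True # replicate k False"
    then obtain r k where q: "q = r @ True # replicate k False" by blast
    have nr: "nnf 0 r" using n q by (simp add: nnf_append)
    have h: "path_height r = int k - 1" using n q by simp
    have "k \<noteq> 0" using nnf_end[OF nr] h by auto
    then show ?thesis using q nr h by (intro exI[of _ r] exI[of _ k]) auto
  qed
qed

lemma valid_T1: "valid p \<Longrightarrow> valid (p @ [True, False])"
  using ado_app[of p "[False]"] ado_rep[of 1]
  by (auto simp: valid_def dyck_iff nnf_append)

lemma ado_tail2:
  assumes "is_dyck q" "q \<noteq> []"
  shows "all_descents_odd (q @ [False, False]) \<longleftrightarrow> all_descents_odd q"
proof -
  obtain r k where q: "q = r @ True # replicate k False" "1 \<le> k"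
    using dyck_last[OF assms] by blast
  have e: "q @ [False, False] = r @ True # replicate (k + 2) False"
    using q by (simp add: replicate_append_same[symmetric])
  have 1: "all_descents_odd (q @ [False, False]) = (all_descents_odd r \<and> (k + 2 = 0 \<or> odd (k + 2)))"
    by (simp only: e ado_app ado_rep)
  have 2: "all_descents_odd q = (all_descents_odd r \<and> (k = 0 \<or> odd k))"
    by (simp only: q(1) ado_app ado_rep)
  show ?thesis using 1 2 q(2) by simp
qed

lemma valid_T2:
  assumes "valid p1" "valid p2" "valid q" "q \<noteq> []"
  shows "valid (p1 @ True # p2 @ True # q @ [False, False])"
proof -
  have d: "nnf 0 p1" "path_height p1 = 0" "nnf 0 p2" "path_height p2 = 0" "nnf 0 q" "path_height q = 0"
    using assms by (auto simp: valid_def dyck_iff)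
  have "nnf 1 p2" "nnf 2 q" using d nnf_mono by auto
  then have "is_dyck (p1 @ True # p2 @ True # q @ [False, False])"
    using d by (simp add: dyck_iff nnf_append)
  moreover have "all_descents_odd (p1 @ True # p2 @ True # q @ [False, False])"
    using assms ado_tail2[of q] by (simp add: ado_app valid_def)
  ultimately show ?thesis by (simp add: valid_def)
qed

lemma valid_decomp:
  assumes "valid xs" "xs \<noteq> []"
  shows "(\<exists>p. valid p \<and> xs = p @ [True, False]) \<or>
         (\<exists>p1 p2 q. valid p1 \<and> valid p2 \<and> valid q \<and> q \<noteq> [] \<and> xs = p1 @ True # p2 @ True # q @ [False, False])"
proof -
  have dx: "is_dyck xs" "all_descents_odd xs" using assms by (auto simp: valid_def)
  obtain R k where R: "xs = R @ True # replicate k False" "1 \<le> k" "nnf 0 R" "path_height R = int k - 1"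
    using dyck_last[OF dx(1) assms(2)] by blast
  have aR: "all_descents_odd R" "odd k" using dx(2) R(1,2) by (auto simp: ado_app ado_rep)
  show ?thesis
  proof (cases "k = 1")
    case True
    then have "xs = R @ [True, False]" using R by simp
    moreover have "valid R" using R True aR by (simp add: valid_def dyck_iff)
    ultimately show ?thesis by blast
  next
    case False
    then have k3: "3 \<le> k" using aR(2) R(2) by presburger
    define w where "w = R @ [True]"
    have nw: "nnf 0 w" "path_height w = int k" using R k3 by (auto simp: w_def nnf_append)
    obtain p1 r1 where r1: "w = p1 @ True # r1" "nnf 0 p1" "path_height p1 = 0" "nnf 0 r1" "path_height r1 = int k - 1"
      using first_return[OF nw(1)] nw(2) k3 by auto
    obtain p2 r2 where r2: "r1 = p2 @ True # r2" "nnf 0 p2" "path_height p2 = 0" "nnf 0 r2" "path_height r2 = int k - 2"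
      using first_return[OF r1(4)] r1(5) k3 by auto
    have r2ne: "r2 \<noteq> []" using r2(5) k3 by auto
    have wr: "w = (p1 @ True # p2 @ True # butlast r2) @ [last r2]"
      using r1(1) r2(1) r2ne by simp
    then have lastT: "last r2 = True" and Req: "R = p1 @ True # p2 @ True # butlast r2"
      unfolding w_def by simp_all
    have r2eq: "r2 = butlast r2 @ [True]" using lastT r2ne by (metis append_butlast_last_id)
    define q where "q = r2 @ replicate (k - 2) False"
    have rep: "replicate k False = replicate (k - 2) False @ [False, False]"
    proof -
      have "k = (k - 2) + 2" using k3 by simp
      then have "replicate k False = replicate (k - 2) False @ replicate 2 False" by (metis replicate_add)
      then show ?thesis by (simp add: numeral_2_eq_2)
    qed
    have xs_eq: "xs = p1 @ True # p2 @ True # q @ [False, False]"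
    proof -
      have "xs = w @ replicate k False" using R(1) by (simp add: w_def)
      also have "\<dots> = p1 @ True # p2 @ True # r2 @ replicate k False" using r1(1) r2(1) by simp
      finally show ?thesis using rep by (simp add: q_def)
    qed
    have aparts: "all_descents_odd p1" "all_descents_odd p2" "all_descents_odd (butlast r2)"
      using aR(1) Req by (auto simp: ado_app)
    have "q = butlast r2 @ True # replicate (k - 2) False"
      using r2eq q_def by (metis append.assoc append_Cons append_Nil)
    then have aq: "all_descents_odd q" using aparts(3) aR(2) k3 by (simp add: ado_app ado_rep)
    have dq: "is_dyck q" using r2 k3 by (simp add: q_def dyck_iff nnf_append nnf_rep)
    have "valid p1" "valid p2" "valid q" using r1 r2 aparts aq dq by (auto simp: valid_def dyck_iff)
    moreover have "q \<noteq> []" using r2ne q_def by simp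
    ultimately show ?thesis using xs_eq by blast
  qed
qed

lemma inj_f3:
  assumes "p1 @ True # p2 @ True # q @ [False, False] = p1' @ True # p2' @ True # q' @ [False, False]"
    "is_dyck p1" "is_dyck p2" "is_dyck q" "is_dyck p1'" "is_dyck p2'" "is_dyck q'"
  shows "p1 = p1' \<and> p2 = p2' \<and> q = q'"
proof -
  have e: "p1 @ True # p2 @ True # q = p1' @ True # p2' @ True # q'" using assms(1) by simp
  have d: "nnf 0 p1" "path_height p1 = 0" "nnf 0 p2" "path_height p2 = 0" "nnf 0 q" "path_height q = 0"
    "nnf 0 p1'" "path_height p1' = 0" "nnf 0 p2'" "path_height p2' = 0" "nnf 0 q'" "path_height q' = 0"
    using assms by (auto simp: dyck_iff)
  have "nnf 1 q" "nnf 1 q'" using d nnf_mono by auto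
  then have "nnf 0 (p2 @ True # q)" "nnf 0 (p2' @ True # q')" using d by (auto simp: nnf_append)
  then have 1: "p1 = p1'" using uniq[OF e] d by simp
  then have e2: "p2 @ True # q = p2' @ True # q'" using e by simp
  have 2: "p2 = p2'" using uniq[OF e2] d by simp
  then show ?thesis using 1 e2 by simp
qed



definition V :: "nat \<Rightarrow> bool list set" where "V n = {xs. length xs = 2 * n \<and> valid xs}"
definition V' :: "nat \<Rightarrow> bool list set" where "V' n = {xs. length xs = 2 * n \<and> valid xs \<and> xs \<noteq> []}"
definition f3 :: "bool list \<times> bool list \<times> bool list \<Rightarrow> bool list" where
  "f3 = (\<lambda>(p1, p2, q). p1 @ True # p2 @ True # q @ [False, False])"
definition W :: "nat \<Rightarrow> (bool list \<times> bool list \<times> bool list) set" where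
  "W n = {(p1, p2, q). valid p1 \<and> valid p2 \<and> valid q \<and> q \<noteq> [] \<and> length p1 + length p2 + length q + 2 = 2 * n}"

lemma a_odd_V: "a_odd n = card (V n)"
  by (simp add: a_odd_def V_def valid_def)

lemma finite_len: "finite {xs :: bool list. length xs = n}"
  using finite_lists_length_eq[of "UNIV :: bool set" n] by simp

lemma finite_V: "finite (V n)"
  by (rule finite_subset[OF _ finite_len[of "2*n"]]) (auto simp: V_def)

lemma finite_V': "finite (V' n)"
  by (rule finite_subset[OF _ finite_V[of n]]) (auto simp: V_def V'_def)

lemma V0: "V 0 = {[]}"
  by (auto simp: V_def)

lemma V'_card: "card (V' n) = (if n = 0 then 0 else card (V n))"
proof (cases "n = 0")
  case True
  then have "V' n = {}" by (auto simp: V'_def)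
  then show ?thesis using True by simp
next
  case False
  then have "V' n = V n" by (auto simp: V'_def V_def)
  then show ?thesis using False by simp
qed

lemma count_len: "count_list xs True + count_list xs False = length xs"
  by (induction xs) auto

lemma dyck_even: "is_dyck xs \<Longrightarrow> length xs = 2 * count_list xs True"
  using count_len[of xs] by (simp add: is_dyck_def path_height_def)

lemma V_Suc: "V (Suc n) = (\<lambda>p. p @ [True, False]) ` V n \<union> f3 ` W n"
proof
  show "V (Suc n) \<subseteq> (\<lambda>p. p @ [True, False]) ` V n \<union> f3 ` W n"
  proof
    fix xs assume "xs \<in> V (Suc n)"
    then have x: "valid xs" "length xs = 2 * Suc n" by (auto simp: V_def)
    then have "xs \<noteq> []" by auto
    from valid_decomp[OF x(1) this] show "xs \<in> (\<lambda>p. p @ [True, False]) ` V n \<union> f3 ` W n"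
    proof
      assume "\<exists>p. valid p \<and> xs = p @ [True, False]"
      then obtain p where "valid p" "xs = p @ [True, False]" by blast
      then show ?thesis using x(2) by (auto simp: V_def)
    next
      assume "\<exists>p1 p2 q. valid p1 \<and> valid p2 \<and> valid q \<and> q \<noteq> [] \<and> xs = p1 @ True # p2 @ True # q @ [False, False]"
      then obtain p1 p2 q where h: "valid p1" "valid p2" "valid q" "q \<noteq> []" "xs = p1 @ True # p2 @ True # q @ [False, False]"
        by blast
      then have "(p1, p2, q) \<in> W n" using x(2) by (auto simp: W_def)
      moreover have "xs = f3 (p1, p2, q)" using h by (simp add: f3_def)
      ultimately show ?thesis by blast
    qed
  qed
next
  show "(\<lambda>p. p @ [True, False]) ` V n \<union> f3 ` W n \<subseteq> V (Suc n)"
  proof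
    fix xs assume "xs \<in> (\<lambda>p. p @ [True, False]) ` V n \<union> f3 ` W n"
    then show "xs \<in> V (Suc n)"
    proof
      assume "xs \<in> (\<lambda>p. p @ [True, False]) ` V n"
      then obtain p where "p \<in> V n" "xs = p @ [True, False]" by blast
      then show ?thesis using valid_T1[of p] by (simp add: V_def)
    next
      assume "xs \<in> f3 ` W n"
      then obtain p1 p2 q where "(p1, p2, q) \<in> W n" "xs = f3 (p1, p2, q)" by auto
      then show ?thesis using valid_T2[of p1 p2 q] by (simp add: V_def W_def f3_def)
    qed
  qed
qed

lemma disj12: "(\<lambda>p. p @ [True, False]) ` V n \<inter> f3 ` W n = {}"
proof -
  have "\<And>p p1 p2 q. p @ [True, False] \<noteq> p1 @ True # p2 @ True # q @ [False, False]"
  proof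
    fix p p1 p2 q assume "p @ [True, False] = p1 @ True # p2 @ True # q @ [False, False]"
    then have "rev (p @ [True, False]) = rev (p1 @ True # p2 @ True # q @ [False, False])" by simp
    then show False by simp
  qed
  then show ?thesis unfolding f3_def by fastforce
qed

lemma inj_on_f3: "inj_on f3 (W n)"
proof (rule inj_onI)
  fix a b assume a: "a \<in> W n" and b: "b \<in> W n" and e: "f3 a = f3 b"
  obtain p1 p2 q where ap: "a = (p1, p2, q)" by (cases a) auto
  obtain p1' p2' q' where bp: "b = (p1', p2', q')" by (cases b) auto
  have "p1 = p1' \<and> p2 = p2' \<and> q = q'"
    apply (rule inj_f3)
    using e a b unfolding ap bp f3_def W_def valid_def by simp_all
  then show "a = b" using ap bp by simp
qed

lemma finite_W: "finite (W n)"
proof -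
  let ?L = "{xs :: bool list. set xs \<subseteq> UNIV \<and> length xs \<le> 2 * n}"
  have "finite ?L" by (rule finite_lists_length_le) simp
  then have "finite (?L \<times> ?L \<times> ?L)" by simp
  moreover have "W n \<subseteq> ?L \<times> ?L \<times> ?L" by (auto simp: W_def)
  ultimately show ?thesis by (rule finite_subset[rotated])
qed

lemma card_Suc: "card (V (Suc n)) = card (V n) + card (W n)"
proof -
  have "card (V (Suc n)) = card ((\<lambda>p. p @ [True, False]) ` V n) + card (f3 ` W n)"
    unfolding V_Suc
    by (rule card_Un_disjoint) (simp_all add: finite_V finite_W disj12)
  also have "card ((\<lambda>p. p @ [True, False]) ` V n) = card (V n)"
    by (rule card_image) (simp add: inj_on_def)
  also have "card (f3 ` W n) = card (W n)"
    by (rule card_image[OF inj_on_f3])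
  finally show ?thesis .
qed


lemma W0: "W 0 = {}"
  by (auto simp: W_def)

lemma valid_len: "valid xs \<Longrightarrow> \<exists>a. length xs = 2 * a"
  using dyck_even by (auto simp: valid_def)

definition Wi :: "nat \<Rightarrow> nat \<Rightarrow> (bool list \<times> bool list \<times> bool list) set" where
  "Wi m i = (\<Union>j\<in>{0..i}. V j \<times> V (i - j) \<times> V' (m - i))"

lemma W_Suc: "W (Suc m) = (\<Union>i\<in>{0..m}. Wi m i)"
proof
  show "W (Suc m) \<subseteq> (\<Union>i\<in>{0..m}. Wi m i)"
  proof
    fix x assume x: "x \<in> W (Suc m)"
    obtain p1 p2 q where xp: "x = (p1, p2, q)" by (cases x) auto
    have h: "valid p1" "valid p2" "valid q" "q \<noteq> []" "length p1 + length p2 + length q = 2 * m"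
      using x xp by (auto simp: W_def)
    obtain a b c where abc: "length p1 = 2 * a" "length p2 = 2 * b" "length q = 2 * c"
      using valid_len h(1,2,3) by metis
    have s: "a + b + c = m" using h(5) abc by simp
    have "(p1, p2, q) \<in> V a \<times> V (a + b - a) \<times> V' (m - (a + b))"
      using h abc s by (auto simp: V_def V'_def)
    then have "x \<in> Wi m (a + b)" unfolding Wi_def xp by force
    moreover have "a + b \<in> {0..m}" using s by simp
    ultimately show "x \<in> (\<Union>i\<in>{0..m}. Wi m i)" by blast
  qed
next
  show "(\<Union>i\<in>{0..m}. Wi m i) \<subseteq> W (Suc m)"
    by (auto simp: Wi_def W_def V_def V'_def)
qed

lemma finite_Wi: "finite (Wi m i)"
  unfolding Wi_def by (intro finite_UN_I) (auto intro: finite_V finite_V' finite_cartesian_product)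

lemma card_Wi: "card (Wi m i) = (\<Sum>j=0..i. card (V j) * card (V (i - j)) * card (V' (m - i)))"
  unfolding Wi_def
proof (subst card_UN_disjoint)
  show "\<forall>j\<in>{0..i}. \<forall>j'\<in>{0..i}. j \<noteq> j' \<longrightarrow>
    (V j \<times> V (i - j) \<times> V' (m - i)) \<inter> (V j' \<times> V (i - j') \<times> V' (m - i)) = {}"
    by (auto simp: V_def)
  show "(\<Sum>j=0..i. card (V j \<times> V (i - j) \<times> V' (m - i))) =
        (\<Sum>j=0..i. card (V j) * card (V (i - j)) * card (V' (m - i)))"
    by (simp add: card_cartesian_product mult.assoc)
qed (auto intro: finite_V finite_V' finite_cartesian_product)

lemma card_W_Suc: "card (W (Suc m)) = (\<Sum>i=0..m. \<Sum>j=0..i. card (V j) * card (V (i - j)) * card (V' (m - i)))"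
  unfolding W_Suc
proof (subst card_UN_disjoint)
  show "\<forall>i\<in>{0..m}. \<forall>i'\<in>{0..m}. i \<noteq> i' \<longrightarrow> Wi m i \<inter> Wi m i' = {}"
  proof (intro ballI impI)
    fix i i' :: nat assume "i \<noteq> i'"
    have len: "\<And>x k. x \<in> Wi m k \<Longrightarrow> length (fst x) + length (fst (snd x)) = 2 * k"
      unfolding Wi_def V_def by auto
    show "Wi m i \<inter> Wi m i' = {}"
    proof (intro equalityI subsetI)
      fix x assume "x \<in> Wi m i \<inter> Wi m i'"
      then have "2 * i = 2 * i'" using len by (metis IntD1 IntD2)
      then show "x \<in> {}" using \<open>i \<noteq> i'\<close> by simp
    qed simp
  qed
  show "(\<Sum>i=0..m. card (Wi m i)) = (\<Sum>i=0..m. \<Sum>j=0..i. card (V j) * card (V (i - j)) * card (V' (m - i)))"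
    by (simp add: card_Wi)
qed (auto intro: finite_Wi)



lemma a0: "a_odd 0 = 1"
  by (simp add: a_odd_V V0)

lemma a_rec0: "a_odd (Suc 0) = 1"
  using card_Suc[of 0] by (simp add: a_odd_V[symmetric] a0 W0)

lemma a_rec: "a_odd (Suc (Suc m)) = a_odd (Suc m) +
  (\<Sum>i=0..m. \<Sum>j=0..i. a_odd j * a_odd (i - j) * (if m - i = 0 then 0 else a_odd (m - i)))"
  unfolding a_odd_V using card_Suc[of "Suc m"] card_W_Suc[of m] by (simp add: V'_card)

definition Ff :: "real fps" where "Ff = Abs_fps (\<lambda>n. real (a_odd n))"

lemma G0_Ff: "G0 = Ff - 1"
  by (rule fps_ext) (simp add: G0_def Ff_def a0)

lemma G0_nth: "G0 $ n = (if n = 0 then 0 else real (a_odd n))"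
  by (simp add: G0_def)

lemma Eq: "G0 = fps_X * Ff + fps_X ^ 2 * (Ff * Ff * G0)"
proof (rule fps_ext)
  fix n show "G0 $ n = (fps_X * Ff + fps_X ^ 2 * (Ff * Ff * G0)) $ n"
  proof (cases n)
    case 0 then show ?thesis by (simp add: G0_nth fps_X_power_mult_nth)
  next
    case (Suc k)
    show ?thesis
    proof (cases k)
      case 0 then show ?thesis using Suc by (simp add: G0_nth fps_X_power_mult_nth Ff_def a0 a_rec0)
    next
      case (Suc m)
      have "(fps_X ^ 2 * (Ff * Ff * G0)) $ n = (Ff * Ff * G0) $ m"
        using Suc \<open>n = Suc k\<close> by (simp add: fps_X_power_mult_nth)
      also have "\<dots> = (\<Sum>i=0..m. (\<Sum>j=0..i. Ff $ j * Ff $ (i - j)) * G0 $ (m - i))"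
        by (simp add: fps_mult_nth)
      also have "\<dots> = (\<Sum>i=0..m. \<Sum>j=0..i. real (a_odd j * a_odd (i - j) * (if m - i = 0 then 0 else a_odd (m - i))))"
      proof -
        have rif: "\<And>P a. real (if P then 0 else a) = (if P then 0 else real a)" by simp
        show ?thesis by (simp add: Ff_def G0_nth sum_distrib_right rif)
      qed
      finally have 1: "(fps_X ^ 2 * (Ff * Ff * G0)) $ n = real (\<Sum>i=0..m. \<Sum>j=0..i. a_odd j * a_odd (i - j) * (if m - i = 0 then 0 else a_odd (m - i)))"
        by simp
      show ?thesis using 1 Suc \<open>n = Suc k\<close> a_rec[of m] by (simp add: G0_nth Ff_def)
    qed
  qed
qed

lemma Eq2: "G0 * (1 - fps_X ^ 2 * (1 + G0) ^ 2) = fps_X * (1 + G0)"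
proof -
  have F: "Ff = 1 + G0" by (metis G0_Ff add.commute diff_add_cancel)
  show ?thesis using Eq unfolding F by (simp add: algebra_simps power2_eq_square)
qed

lemma conj2: "G0 = fps_X * (1 + G0) / (1 - fps_X ^ 2 * (1 + G0) ^ 2)"
proof -
  let ?D = "1 - fps_X ^ 2 * (1 + G0) ^ 2 :: real fps"
  have "?D $ 0 = 1" by (simp add: fps_X_power_mult_nth)
  have "?D \<noteq> 0"
  proof
    assume "?D = 0" then have "?D $ 0 = 0" by simp
    with \<open>?D $ 0 = 1\<close> show False by simp
  qed
  then have "G0 * ?D / ?D = G0" by (rule fps_divide_times_eq)
  then show ?thesis using Eq2 by simp
qed

lemma conj3: "fps_X ^ 2 * G0 ^ 3 + 2 * fps_X ^ 2 * G0 ^ 2 - (1 - fps_X - fps_X ^ 2) * G0 + fps_X = 0"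
proof -
  have "fps_X ^ 2 * G0 ^ 3 + 2 * fps_X ^ 2 * G0 ^ 2 - (1 - fps_X - fps_X ^ 2) * G0 + fps_X
     = fps_X * (1 + G0) - G0 * (1 - fps_X ^ 2 * (1 + G0) ^ 2)"
    by (simp add: algebra_simps power2_eq_square power3_eq_cube)
  then show ?thesis using Eq2 by simp
qed

lemma vals: "map a_odd [1, 2, 3, 4, 5, 6, 7] = [1, 1, 2, 5, 12, 30, 79]"
proof -
  have a1: "a_odd 1 = 1" using a_rec0 by simp
  have a2: "a_odd 2 = 1" using a_rec[of 0] a1 a0 by (simp add: numeral_2_eq_2)
  have a3: "a_odd 3 = 2" using a_rec[of 1] a2 a1 a0 by (simp add: numeral_3_eq_3 numeral_2_eq_2)
  have a4: "a_odd 4 = 5" using a_rec[of 2] a3 a2 a1 a0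
    by (simp add: atLeast0AtMost atMost_nat_numeral eval_nat_numeral)
  have a5: "a_odd 5 = 12" using a_rec[of 3] a4 a3 a2 a1 a0
    by (simp add: atLeast0AtMost atMost_nat_numeral eval_nat_numeral)
  have a6: "a_odd 6 = 30" using a_rec[of 4] a5 a4 a3 a2 a1 a0
    by (simp add: atLeast0AtMost atMost_nat_numeral eval_nat_numeral)
  have a7: "a_odd 7 = 79" using a_rec[of 5] a6 a5 a4 a3 a2 a1 a0
    by (simp add: atLeast0AtMost atMost_nat_numeral eval_nat_numeral)
  show ?thesis using a1 a2 a3 a4 a5 a6 a7 by simp
qed



lemma S_nth: "(f oo (fps_X ^ 2 :: real fps)) $ n = (if even n then f $ (n div 2) else 0)"
proof -
  have "(f oo fps_X ^ 2) $ n = (\<Sum>i=0..n. f $ i * (if i = n div 2 \<and> even n then 1 else 0))"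
    unfolding fps_compose_nth power_mult[symmetric]
    by (intro sum.cong refl) (auto simp: fps_X_power_nth)
  also have "\<dots> = (\<Sum>i=0..n. if i = n div 2 then (if even n then f $ i else 0) else 0)"
    by (intro sum.cong refl) auto
  also have "\<dots> = (if even n then f $ (n div 2) else 0)"
    by (subst sum.delta) auto
  finally show ?thesis .
qed

definition P :: "real fps" where "P = Ff oo fps_X ^ 2"
definition PF :: "real fls" where "PF = fps_to_fls P"

lemma X20: "(fps_X ^ 2 :: real fps) $ 0 = 0" by simp

lemma P0: "P $ 0 = 1"
  unfolding P_def by (simp add: Ff_def a0)

lemma g0_PF: "g0 = PF - 1"
proof -
  have "G0 oo fps_X ^ 2 = Abs_fps (\<lambda>k. if even k \<and> k > 0 then real (a_odd (k div 2)) else 0)"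
    by (rule fps_ext) (auto simp: S_nth G0_nth)
  moreover have "G0 oo fps_X ^ 2 = P - 1"
    unfolding P_def G0_Ff by (simp add: fps_compose_sub_distrib)
  ultimately have e: "Abs_fps (\<lambda>k. if even k \<and> k > 0 then real (a_odd (k div 2)) else 0) = P - 1" by simp
  show ?thesis by (simp only: g0_def e fps_to_fls_minus fps_one_to_fls PF_def)
qed

lemma PEq: "(P - 1) * (1 - fps_X ^ 4 * P ^ 2) = fps_X ^ 2 * P"
proof -
  have F: "Ff = 1 + G0" by (metis G0_Ff add.commute diff_add_cancel)
  have e: "(Ff - 1) * (1 - fps_X ^ 2 * Ff ^ 2) = fps_X * Ff" using Eq2 unfolding F by simp
  have "((Ff - 1) * (1 - fps_X ^ 2 * Ff ^ 2)) oo fps_X ^ 2 = (fps_X * Ff) oo fps_X ^ 2"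
    using e by simp
  moreover have "((Ff - 1) * (1 - fps_X ^ 2 * Ff ^ 2)) oo fps_X ^ 2 = (P - 1) * (1 - fps_X ^ 4 * P ^ 2)"
    unfolding P_def
    by (simp add: fps_compose_mult_distrib[OF X20] fps_compose_sub_distrib fps_compose_power[OF X20, symmetric]
        power_mult[symmetric])
  moreover have "(fps_X * Ff) oo fps_X ^ 2 = fps_X ^ 2 * P"
    unfolding P_def by (simp add: fps_compose_mult_distrib[OF X20])
  ultimately show ?thesis by simp
qed

lemma PFEq: "(PF - 1) * (1 - fls_X ^ 4 * PF ^ 2) = fls_X ^ 2 * PF"
proof -
  have "fps_to_fls ((P - 1) * (1 - fps_X ^ 4 * P ^ 2)) = fps_to_fls (fps_X ^ 2 * P)" using PEq by simp
  then show ?thesis unfolding PF_def by (simp add: fls_times_fps_to_fls fps_to_fls_power)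
qed

definition u0 :: "real fls" where "u0 = fls_shift 1 (fps_to_fls (inverse P))"

lemma Xu0: "fls_X * u0 = fps_to_fls (inverse P)"
  unfolding u0_def fls_X_times_conv_shift by simp

lemma wu0: "(fls_X * PF) * u0 = 1"
proof -
  have "(fls_X * PF) * u0 = PF * (fls_X * u0)" by (simp add: algebra_simps)
  also have "\<dots> = fps_to_fls (P * inverse P)" unfolding Xu0 PF_def by (simp add: fls_times_fps_to_fls)
  also have "P * inverse P = 1" using P0 by (simp add: inverse_mult_eq_1')
  finally show ?thesis by simp
qed

lemma PF_nz: "PF \<noteq> 0"
  using P0 unfolding PF_def by auto

lemma w_nz: "fls_X * PF \<noteq> 0"
  using PF_nz by simp

lemma cubic_u0: "cubic_v u0 = 0"
proof -
  define w where "w = fls_X * PF"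
  have wu: "u0 * w = 1" using wu0 unfolding w_def by (simp add: mult.commute)
  have "cubic_v u0 * w ^ 3 = fls_X * (u0 * w) ^ 3 + (fls_X ^ 2 - 1) * (u0 * w) ^ 2 * w - fls_X ^ 3 * (u0 * w) * w ^ 2 + fls_X ^ 2 * w ^ 3"
    unfolding cubic_v_def by (simp add: algebra_simps power2_eq_square power3_eq_cube)
  also have "\<dots> = fls_X + (fls_X ^ 2 - 1) * w - fls_X ^ 3 * w ^ 2 + fls_X ^ 2 * w ^ 3"
    unfolding wu by simp
  also have "\<dots> = - fls_X * ((PF - 1) * (1 - fls_X ^ 4 * PF ^ 2) - fls_X ^ 2 * PF)"
    unfolding w_def by (simp add: algebra_simps power2_eq_square power3_eq_cube power4_eq_xxxx)
  also have "\<dots> = 0" using PFEq by simp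
  finally have "cubic_v u0 * w ^ 3 = 0" .
  moreover have "w ^ 3 \<noteq> 0" using w_nz unfolding w_def by simp
  ultimately show ?thesis by simp
qed

lemma u0_props: "u0 \<noteq> 0" "fls_subdegree u0 = -1" "fls_nth u0 (-1) = 1"
proof -
  have ip: "inverse P $ 0 = 1" using P0 by simp
  then have nz: "fps_to_fls (inverse P) \<noteq> 0" by auto
  then show "u0 \<noteq> 0" unfolding u0_def by (metis fls_shift_eq0_iff)
  show "fls_subdegree u0 = -1" unfolding u0_def using nz ip by (simp add: fls_subdegree_fls_to_fps)
  show "fls_nth u0 (-1) = 1" unfolding u0_def using ip by simp
qed

lemma regpart_lemma:
  fixes u :: "real fls"
  assumes "u \<noteq> 0" "fls_subdegree u = -1" "fls_nth u (-1) = 1"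
  shows "fps_to_fls (fls_regpart (fls_X * u)) = fls_X * u" "fls_regpart (fls_X * u) $ 0 = 1"
proof -
  have "fls_subdegree (fls_X * u) = 0" using assms by (simp add: fls_X_times_conv_shift(1))
  then show "fps_to_fls (fls_regpart (fls_X * u)) = fls_X * u" by simp
  show "fls_regpart (fls_X * u) $ 0 = 1" using assms by (simp add: fls_X_times_conv_shift(1))
qed

lemma uniq_root:
  fixes u :: "real fls"
  assumes "cubic_v u = 0" "u \<noteq> 0" "fls_subdegree u = -1" "fls_nth u (-1) = 1"
  shows "u = u0"
proof -
  define Br where "Br = fls_X * (u ^ 2 + u * u0 + u0 ^ 2) + (fls_X ^ 2 - 1) * (u + u0) - fls_X ^ 3"
  have "cubic_v u - cubic_v u0 = (u - u0) * Br"
    unfolding cubic_v_def Br_def by (simp add: algebra_simps power2_eq_square power3_eq_cube)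
  then have 0: "(u - u0) * Br = 0" using assms(1) cubic_u0 by simp
  define a1 where "a1 = fls_regpart (fls_X * u)"
  define a2 where "a2 = fls_regpart (fls_X * u0)"
  have r1: "fps_to_fls a1 = fls_X * u" "a1 $ 0 = 1" using regpart_lemma[OF assms(2-4)] unfolding a1_def by auto
  have r2: "fps_to_fls a2 = fls_X * u0" "a2 $ 0 = 1" using regpart_lemma[OF u0_props] unfolding a2_def by auto
  define Q where "Q = a1 ^ 2 + a1 * a2 + a2 ^ 2 + (fps_X ^ 2 - 1) * (a1 + a2) - fps_X ^ 4"
  have "fls_X * Br = (fls_X * u) ^ 2 + (fls_X * u) * (fls_X * u0) + (fls_X * u0) ^ 2
      + (fls_X ^ 2 - 1) * ((fls_X * u) + (fls_X * u0)) - fls_X ^ 4"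
    unfolding Br_def by (simp add: algebra_simps power2_eq_square power3_eq_cube power4_eq_xxxx)
  also have "\<dots> = fps_to_fls Q"
    unfolding Q_def r1(1)[symmetric] r2(1)[symmetric] by (simp add: fls_times_fps_to_fls fps_to_fls_power)
  finally have XB: "fls_X * Br = fps_to_fls Q" .
  have "Q $ 0 = 1" unfolding Q_def using r1(2) r2(2) by (simp add: fps_power_zeroth)
  then have "Q \<noteq> 0" by auto
  then have "Br \<noteq> 0" using XB by auto
  then show ?thesis using 0 by simp
qed

lemma v1_eq: "v1 = u0"
  unfolding v1_def
  by (rule the_equality) (use cubic_u0 u0_props uniq_root in auto)

lemma conj1: "g0 = fls_X * v1 / (v1 ^ 2 - fls_X ^ 2)"
proof -
  define w where "w = fls_X * PF"
  have wu: "u0 * w = 1" using wu0 unfolding w_def by (simp add: mult.commute)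
  have wnz: "w \<noteq> 0" using w_nz unfolding w_def .
  have d: "(u0 ^ 2 - fls_X ^ 2) * w ^ 2 = 1 - fls_X ^ 4 * PF ^ 2"
  proof -
    have "(u0 ^ 2 - fls_X ^ 2) * w ^ 2 = (u0 * w) ^ 2 - fls_X ^ 2 * w ^ 2" by (simp add: algebra_simps power2_eq_square)
    then show ?thesis unfolding wu unfolding w_def by (simp add: algebra_simps power2_eq_square power4_eq_xxxx)
  qed
  have "1 - fls_X ^ 4 * PF ^ 2 = fps_to_fls (1 - fps_X ^ 4 * P ^ 2)" unfolding PF_def
    by (simp add: fls_times_fps_to_fls fps_to_fls_power)
  moreover have "(1 - fps_X ^ 4 * P ^ 2) $ 0 = 1" by (simp add: fps_X_power_mult_nth)
  ultimately have "1 - fls_X ^ 4 * PF ^ 2 \<noteq> 0" by (metis fps_to_fls_eq_0_iff fps_zero_nth zero_neq_one)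
  then have dnz: "u0 ^ 2 - fls_X ^ 2 \<noteq> 0" using d by auto
  have L: "(PF - 1) * (u0 ^ 2 - fls_X ^ 2) * w ^ 2 = fls_X ^ 2 * PF"
  proof -
    have "(PF - 1) * (u0 ^ 2 - fls_X ^ 2) * w ^ 2 = (PF - 1) * ((u0 ^ 2 - fls_X ^ 2) * w ^ 2)"
      by (simp only: mult.assoc)
    also have "\<dots> = fls_X ^ 2 * PF" unfolding d by (rule PFEq)
    finally show ?thesis .
  qed
  have R: "fls_X * u0 * w ^ 2 = fls_X ^ 2 * PF"
  proof -
    have "fls_X * u0 * w ^ 2 = fls_X * (u0 * w) * w" by (simp add: power2_eq_square mult.assoc)
    also have "\<dots> = fls_X * w" unfolding wu by simp
    also have "\<dots> = fls_X ^ 2 * PF" unfolding w_def by (simp add: power2_eq_square mult.assoc)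
    finally show ?thesis .
  qed
  have "(PF - 1) * (u0 ^ 2 - fls_X ^ 2) * w ^ 2 = fls_X * u0 * w ^ 2" using L R by simp
  then have "(PF - 1) * (u0 ^ 2 - fls_X ^ 2) = fls_X * u0" using wnz by simp
  then have "PF - 1 = fls_X * u0 / (u0 ^ 2 - fls_X ^ 2)" using dnz by (simp add: eq_divide_eq)
  then show ?thesis unfolding g0_PF v1_eq .
qed


theorem mainTheorem1:
  shows "g0 = fls_X * v1 / (v1 ^ 2 - fls_X ^ 2)
    \<and> G0 = fps_X * (1 + G0) / (1 - fps_X ^ 2 * (1 + G0) ^ 2)
    \<and> fps_X ^ 2 * G0 ^ 3 + 2 * fps_X ^ 2 * G0 ^ 2 - (1 - fps_X - fps_X ^ 2) * G0 + fps_X = 0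
    \<and> map a_odd [1, 2, 3, 4, 5, 6, 7] = [1, 1, 2, 5, 12, 30, 79]"
  using conj1 conj2 conj3 vals by blast

end
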